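(* Let $N\ge1$ be an integer and $x\in\mathbb{S}$. Then $\epsilon(N)-\epsilon(N+1)>0$, $\epsilon(N)-2\epsilon(N+1)+\epsilon(N+2)>0$, $\epsilon(N,x)-\epsilon(N+1,x)>0$ and $\epsilon(N,x)-2\epsilon(N+1,x)+\epsilon(N+2,x)>0$.
   Context: Let $\pi,q$ be probability densities with respect to a $\sigma$-finite measure $\mu$ on $\mathbb{X}$ with $q>0$ wherever $\pi>0$; $\pi(dx)=\pi(x)\mu(dx)$, $q(dx)=q(x)\mu(dx)$, $\mathbb{S}=\{\pi>0\}$, $w=\pi/q$ on $\mathbb{S}$ and $0$ elsewhere. For integer $N\ge1$ and $z_1\in\mathbb{S}$, $\epsilon(N,z_1)=\int_{\mathbb{X}^{N-1}}\frac{w(z_1)}{\sum_{i=1}^Nw(z_i)}\prod_{n=2}^Nq(dz_n)$ (so $\epsilon(1,z_1)=1$) and $\epsilon(N)=\int_{\mathbb{S}}\epsilon(N,z)\pi(dz)$. *)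

theory Defs
  imports "HOL-Probability.Probability"
begin

definition supp_set :: "'a measure \<Rightarrow> ('a \<Rightarrow> real) \<Rightarrow> 'a set" where
  "supp_set M p = {x \<in> space M. p x > 0}"

definition wgt :: "('a \<Rightarrow> real) \<Rightarrow> ('a \<Rightarrow> real) \<Rightarrow> 'a \<Rightarrow> real" where
  "wgt p q x = (if p x > 0 then p x / q x else 0)"

text \<open>epsilon(N, z1): the variables z_2, ..., z_N are indexed by {2..N} and drawn
  independently from q(dz) = q(z) mu(dz).\<close>
definition eps_pt :: "'a measure \<Rightarrow> ('a \<Rightarrow> real) \<Rightarrow> ('a \<Rightarrow> real) \<Rightarrow> nat \<Rightarrow> 'a \<Rightarrow> real" where
  "eps_pt M p q N z1 =
     (\<integral>zs. wgt p q z1 / (wgt p q z1 + (\<Sum>n\<in>{2..N}. wgt p q (zs n)))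
        \<partial>(PiM {2..N} (\<lambda>_. density M (\<lambda>x. ennreal (q x)))))"

definition eps :: "'a measure \<Rightarrow> ('a \<Rightarrow> real) \<Rightarrow> ('a \<Rightarrow> real) \<Rightarrow> nat \<Rightarrow> real" where
  "eps M p q N = set_lebesgue_integral (density M (\<lambda>x. ennreal (p x))) (supp_set M p) (eps_pt M p q N)"

end

theory Submission
  imports Defs
begin


definition ff :: "real \<Rightarrow> real \<Rightarrow> real" where "ff a t = a / (a + t)"

lemma ff_meas[measurable]: "ff a \<in> borel_measurable borel"
  unfolding ff_def by measurable

lemma ff_bound: "a > 0 \<Longrightarrow> t \<ge> 0 \<Longrightarrow> \<bar>ff a t\<bar> \<le> 1"
proof -
  assume "a > 0" "t \<ge> 0"
  then have "0 \<le> a / (a + t)" "a / (a + t) \<le> 1" by (auto simp: divide_le_eq_1)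
  then show ?thesis unfolding ff_def by (simp only: abs_of_nonneg)
qed

lemma ff_mono: "a > 0 \<Longrightarrow> t \<ge> 0 \<Longrightarrow> u \<ge> 0 \<Longrightarrow> ff a t - ff a (t + u) \<ge> 0"
  unfolding ff_def by (simp add: frac_le)

lemma ff_smono: "a > 0 \<Longrightarrow> t \<ge> 0 \<Longrightarrow> u > 0 \<Longrightarrow> ff a t - ff a (t + u) > 0"
  unfolding ff_def by (simp add: divide_strict_left_mono)

lemma ff_cvx: assumes "a > 0" "t \<ge> 0" "u \<ge> 0" "v \<ge> 0"
  shows "ff a t - ff a (t + u) - ff a (t + v) + ff a (t + u + v) \<ge> 0"
proof -
  have e: "ff a s - ff a (s + w) = a * w / ((a + s) * (a + s + w))" if "s \<ge> 0" "w \<ge> 0" for s w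
    using that assms unfolding ff_def by (simp add: field_simps)
  have "a * u / ((a + (t + v)) * (a + (t + v) + u)) \<le> a * u / ((a + t) * (a + t + u))"
    using assms by (intro divide_left_mono mult_mono) auto
  then show ?thesis using e[of t u] e[of "t+v" u] assms by (simp add: algebra_simps)
qed

lemma ff_scvx: assumes "a > 0" "t \<ge> 0" "u > 0" "v > 0"
  shows "ff a t - ff a (t + u) - ff a (t + v) + ff a (t + u + v) > 0"
proof -
  have e: "ff a s - ff a (s + w) = a * w / ((a + s) * (a + s + w))" if "s \<ge> 0" "w \<ge> 0" for s w
    using that assms unfolding ff_def by (simp add: field_simps)
  have "(a + t) * (a + t + u) < (a + (t + v)) * (a + (t + v) + u)"
    using assms by (intro mult_strict_mono) auto
  then have "a * u / ((a + (t + v)) * (a + (t + v) + u)) < a * u / ((a + t) * (a + t + u))"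
    using assms by (intro divide_strict_left_mono) auto
  then show ?thesis using e[of t u] e[of "t+v" u] assms by (simp add: algebra_simps)
qed

lemma pos_integral:
  fixes g :: "'b \<Rightarrow> real"
  assumes "prob_space P" "integrable P g" "\<And>x. x \<in> space P \<Longrightarrow> g x \<ge> 0"
    and "emeasure P {x\<in>space P. g x > 0} \<noteq> 0"
  shows "integral\<^sup>L P g > 0"
proof -
  have ge: "integral\<^sup>L P g \<ge> 0" using assms by (intro integral_nonneg_AE AE_I2) auto
  have [measurable]: "g \<in> borel_measurable P" using assms(2) by auto
  show ?thesis
  proof (rule ccontr)
    assume "\<not> ?thesis"
    then have "integral\<^sup>L P g = 0" using ge by auto
    then have "AE x in P. g x = 0"
      using integral_nonneg_eq_0_iff_AE[OF assms(2)] assms(3) by (auto intro: AE_I2)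
    then have "AE x in P. \<not> g x > 0" by auto
    then have "emeasure P {x\<in>space P. g x > 0} = 0"
      by (subst (asm) AE_iff_measurable[OF _ refl]) auto
    then show False using assms(4) by simp
  qed
qed

lemma dens_pos:
  fixes M :: "'a measure" and g p :: "'a \<Rightarrow> real"
  assumes [measurable]: "g \<in> borel_measurable M" "p \<in> borel_measurable M"
    and "\<And>y. y \<in> space M \<Longrightarrow> p y \<ge> 0" "\<And>y. y \<in> space M \<Longrightarrow> g y \<ge> 0"
    and "(\<integral>\<^sup>+ y. ennreal (p y) \<partial>M) = 1"
    and "\<And>y. y \<in> space M \<Longrightarrow> p y > 0 \<Longrightarrow> g y > 0"
  shows "emeasure (density M (\<lambda>x. ennreal (g x))) {y\<in>space M. p y > 0} \<noteq> 0"
proof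
  assume "emeasure (density M (\<lambda>x. ennreal (g x))) {y\<in>space M. p y > 0} = 0"
  then have "(\<integral>\<^sup>+ x. ennreal (g x) * indicator {y\<in>space M. p y > 0} x \<partial>M) = 0"
    by (subst (asm) emeasure_density) auto
  then have "AE x in M. ennreal (g x) * indicator {y\<in>space M. p y > 0} x = 0"
    by (subst (asm) nn_integral_0_iff_AE) auto
  then have "AE x in M. ennreal (p x) = 0"
  proof (rule AE_mp, intro AE_I2 impI)
    fix x assume x: "x \<in> space M" and h: "ennreal (g x) * indicator {y\<in>space M. p y > 0} x = 0"
    show "ennreal (p x) = 0"
    proof (cases "p x > 0")
      case True then show ?thesis using h x assms(6)[of x] by (auto simp: indicator_def)
    next
      case False then show ?thesis using assms(3)[OF x] by auto
    qed
  qed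
  then have "(\<integral>\<^sup>+ y. ennreal (p y) \<partial>M) = 0"
    by (subst nn_integral_0_iff_AE) auto
  then show False using assms(5) by simp
qed

lemma integrable_bnd:
  assumes "prob_space R" "g \<in> borel_measurable R" "\<And>x. x \<in> space R \<Longrightarrow> \<bar>g x\<bar> \<le> B"
  shows "integrable R (g :: _ \<Rightarrow> real)"
proof -
  interpret prob_space R by fact
  show ?thesis using assms by (intro integrable_const_bound[where B=B] AE_I2) auto
qed

lemma integral_bnd:
  assumes "prob_space R" "g \<in> borel_measurable R" "\<And>x. x \<in> space R \<Longrightarrow> \<bar>g x\<bar> \<le> B"
  shows "\<bar>integral\<^sup>L R (g :: _ \<Rightarrow> real)\<bar> \<le> B"
proof -
  interpret prob_space R by fact
  have int: "integrable R g" by (rule integrable_bnd[OF assms])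
  have "norm (integral\<^sup>L R g) \<le> (\<integral>x. norm (g x) \<partial>R)" by (rule integral_norm_bound)
  also have "\<dots> \<le> integral\<^sup>L R (\<lambda>_. B)"
    using assms int by (intro integral_mono) auto
  finally show ?thesis by (simp add: prob_space)
qed




locale setting =
  fixes M :: "'a measure" and p q :: "'a \<Rightarrow> real"
  assumes pm[measurable]: "p \<in> borel_measurable M" and qm[measurable]: "q \<in> borel_measurable M"
    and p_nn: "\<And>y. y \<in> space M \<Longrightarrow> p y \<ge> 0"
    and q_nn: "\<And>y. y \<in> space M \<Longrightarrow> q y \<ge> 0"
    and p1: "(\<integral>\<^sup>+ y. ennreal (p y) \<partial>M) = 1"
    and q1: "(\<integral>\<^sup>+ y. ennreal (q y) \<partial>M) = 1"
    and pq: "\<And>y. y \<in> space M \<Longrightarrow> p y > 0 \<Longrightarrow> q y > 0"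
begin

abbreviation "Q \<equiv> density M (\<lambda>x. ennreal (q x))"
abbreviation "W \<equiv> wgt p q"
abbreviation "P k \<equiv> PiM {2..k} (\<lambda>_::nat. Q)"
definition "S k zs = (\<Sum>n\<in>{2..k}. W (zs n))"

lemma W_meas[measurable]: "W \<in> borel_measurable M"
  unfolding wgt_def by measurable

lemma W_measQ[measurable]: "W \<in> borel_measurable Q"
  by simp

lemma W_nn: "y \<in> space M \<Longrightarrow> W y \<ge> 0"
  unfolding wgt_def using p_nn q_nn by auto

lemma W_pos_iff: "y \<in> space M \<Longrightarrow> W y > 0 \<longleftrightarrow> p y > 0"
  unfolding wgt_def using p_nn pq by auto

lemma probQ: "prob_space Q"
proof
  have "emeasure Q (space M) = (\<integral>\<^sup>+ y. ennreal (q y) * indicator (space M) y \<partial>M)"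
    by (subst emeasure_density) auto
  also have "\<dots> = (\<integral>\<^sup>+ y. ennreal (q y) \<partial>M)"
    by (intro nn_integral_cong) auto
  finally show "emeasure Q (space Q) = 1" using q1 by simp
qed

lemma probP: "prob_space (P k)"
  by (intro prob_space_PiM probQ)

lemma S_meas[measurable]: "S k \<in> borel_measurable (P k)"
  unfolding S_def by measurable

lemma S_nn: "zs \<in> space (P k) \<Longrightarrow> S k zs \<ge> 0"
  unfolding S_def by (intro sum_nonneg W_nn) (auto simp: space_PiM)

lemma Q_pos: "emeasure Q {y\<in>space Q. W y > 0} \<noteq> 0"
proof -
  have "{y\<in>space Q. W y > 0} = {y\<in>space M. p y > 0}" using W_pos_iff by auto
  then show ?thesis using dens_pos[OF qm pm p_nn q_nn p1 pq] by simp
qed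

lemma lemA:
  fixes \<phi> :: "real \<Rightarrow> real"
  assumes k: "k \<ge> 1" and [measurable]: "\<phi> \<in> borel_measurable borel"
    and bnd: "\<And>t. t \<ge> 0 \<Longrightarrow> \<bar>\<phi> t\<bar> \<le> B"
  shows "(\<integral>zs. \<phi> (S (k+1) zs) \<partial>P (k+1)) = (\<integral>zs. (\<integral>y. \<phi> (S k zs + W y) \<partial>Q) \<partial>P k)"
proof -
  interpret Q: prob_space Q by (rule probQ)
  interpret product_sigma_finite "\<lambda>_::nat. Q" by unfold_locales
  have I: "{2..k+1} = insert (k+1) {2..k}" using k by auto
  have int: "integrable (P (k+1)) (\<lambda>zs. \<phi> (S (k+1) zs))"
    by (rule integrable_bnd[OF probP]) (auto intro: bnd S_nn)
  have "(\<integral>zs. \<phi> (S (k+1) zs) \<partial>P (k+1)) = (\<integral>zs. (\<integral>y. \<phi> (S (k+1) (zs(k+1 := y))) \<partial>Q) \<partial>P k)"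
    using product_integral_insert[of "{2..k}" "k+1" "\<lambda>zs. \<phi> (S (k+1) zs)"] int unfolding I by auto
  also have "\<dots> = (\<integral>zs. (\<integral>y. \<phi> (S k zs + W y) \<partial>Q) \<partial>P k)"
  proof -
    have "S (k+1) (zs(k+1 := y)) = S k zs + W y" for zs y
    proof -
      have "S (k+1) (zs(k+1 := y)) = (\<Sum>n\<in>insert (k+1) {2..k}. W ((zs(k+1 := y)) n))"
        unfolding S_def I ..
      also have "\<dots> = W y + (\<Sum>n\<in>{2..k}. W ((zs(k+1 := y)) n))" by simp
      also have "(\<Sum>n\<in>{2..k}. W ((zs(k+1 := y)) n)) = S k zs" unfolding S_def
        by (intro sum.cong) auto
      finally show ?thesis by (simp only: add.commute)
    qed
    then show ?thesis by simp
  qed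
  finally show ?thesis .
qed

lemma lemB_meas[measurable]:
  fixes \<phi> :: "real \<Rightarrow> real"
  assumes [measurable]: "\<phi> \<in> borel_measurable borel"
  shows "(\<lambda>t. \<integral>y. \<phi> (t + W y) \<partial>Q) \<in> borel_measurable borel"
proof -
  interpret Q: prob_space Q by (rule probQ)
  show ?thesis
    by (rule Q.borel_measurable_lebesgue_integral[where f="\<lambda>t y. \<phi> (t + W y)"]) measurable
qed

lemma lemB_bnd:
  fixes \<phi> :: "real \<Rightarrow> real"
  assumes [measurable]: "\<phi> \<in> borel_measurable borel"
    and bnd: "\<And>t. t \<ge> 0 \<Longrightarrow> \<bar>\<phi> t\<bar> \<le> B" and t: "t \<ge> 0"
  shows "\<bar>\<integral>y. \<phi> (t + W y) \<partial>Q\<bar> \<le> B"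
  by (rule integral_bnd[OF probQ]) (auto intro!: bnd simp: t W_nn)

lemma lemB_int:
  fixes \<phi> :: "real \<Rightarrow> real"
  assumes [measurable]: "\<phi> \<in> borel_measurable borel"
    and bnd: "\<And>t. t \<ge> 0 \<Longrightarrow> \<bar>\<phi> t\<bar> \<le> B" and t: "t \<ge> 0"
  shows "integrable Q (\<lambda>y. \<phi> (t + W y))"
  by (rule integrable_bnd[OF probQ]) (auto intro!: bnd simp: t W_nn)

end


lemma pos_integral':
  fixes g :: "'b \<Rightarrow> real"
  assumes "prob_space P" "integrable P g" "\<And>x. x \<in> space P \<Longrightarrow> g x \<ge> 0"
    and "A \<in> sets P" "emeasure P A \<noteq> 0" "\<And>x. x \<in> A \<Longrightarrow> g x > 0"
  shows "integral\<^sup>L P g > 0"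
proof (rule pos_integral[OF assms(1-3)])
  have [measurable]: "g \<in> borel_measurable P" using assms(2) by auto
  have "A \<subseteq> {x\<in>space P. g x > 0}" using assms(4,6) sets.sets_into_space by auto
  then have "emeasure P A \<le> emeasure P {x\<in>space P. g x > 0}"
    by (intro emeasure_mono) auto
  then show "emeasure P {x\<in>space P. g x > 0} \<noteq> 0" using assms(5) by (auto simp: zero_less_iff_neq_zero[symmetric] order.strict_trans2)
qed

context setting begin

definition "F k a = (\<integral>zs. ff a (S k zs) \<partial>P k)"
definition "h a t = (\<integral>y. ff a (t + W y) \<partial>Q)"
definition "g1 a t = ff a t - h a t"
definition "kk a t = (\<integral>y. h a (t + W y) \<partial>Q)"

lemma h_meas[measurable]: "h a \<in> borel_measurable borel"
  unfolding h_def[abs_def] by (rule lemB_meas) simp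

lemma h_bnd: "a > 0 \<Longrightarrow> t \<ge> 0 \<Longrightarrow> \<bar>h a t\<bar> \<le> 1"
  unfolding h_def by (rule lemB_bnd[where B=1]) (auto intro: ff_bound)

lemma g1_meas[measurable]: "g1 a \<in> borel_measurable borel"
  unfolding g1_def[abs_def] by measurable

lemma g1_bnd: "a > 0 \<Longrightarrow> t \<ge> 0 \<Longrightarrow> \<bar>g1 a t\<bar> \<le> 2"
  unfolding g1_def using h_bnd[of a t] ff_bound[of a t] by linarith

lemma kk_meas[measurable]: "kk a \<in> borel_measurable borel"
  unfolding kk_def[abs_def] by (rule lemB_meas) simp

lemma kk_bnd: "a > 0 \<Longrightarrow> t \<ge> 0 \<Longrightarrow> \<bar>kk a t\<bar> \<le> 1"
  unfolding kk_def by (rule lemB_bnd[where B=1]) (auto intro: h_bnd)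

lemma ff_intQ: "a > 0 \<Longrightarrow> t \<ge> 0 \<Longrightarrow> integrable Q (\<lambda>y. ff a (t + W y))"
  by (rule lemB_int[where B=1]) (auto intro: ff_bound)

lemma h_intQ: "a > 0 \<Longrightarrow> t \<ge> 0 \<Longrightarrow> integrable Q (\<lambda>y. h a (t + W y))"
  by (rule lemB_int[where B=1]) (auto intro: h_bnd)

lemma g1_intQ: "a > 0 \<Longrightarrow> t \<ge> 0 \<Longrightarrow> integrable Q (\<lambda>y. g1 a (t + W y))"
  by (rule lemB_int[where B=2]) (auto intro: g1_bnd)

lemma probQ1[simp]: "measure Q (space M) = 1"
  using prob_space.prob_space[OF probQ] by simp

lemma Wset: "{y\<in>space Q. W y > 0} \<in> sets Q" by measurable

lemma g1_pos: assumes a: "a > 0" and t: "t \<ge> 0" shows "g1 a t > 0"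
proof -
  interpret Q: prob_space Q by (rule probQ)
  have "g1 a t = (\<integral>y. ff a t - ff a (t + W y) \<partial>Q)"
    unfolding g1_def h_def using ff_intQ[OF a t] by (simp add: Q.prob_space)
  also have "\<dots> > 0"
    by (rule pos_integral'[OF probQ _ _ Wset Q_pos])
       (use ff_mono[OF a t W_nn] ff_smono[OF a t] ff_intQ[OF a t] in auto)
  finally show ?thesis .
qed

lemma g1_diff: assumes a: "a > 0" and t: "t \<ge> 0" and u: "u \<ge> 0"
  shows "g1 a t - g1 a (t + u) =
    (\<integral>y. ff a t - ff a (t + W y) - ff a (t + u) + ff a (t + u + W y) \<partial>Q)"
proof -
  interpret Q: prob_space Q by (rule probQ)
  have i1: "integrable Q (\<lambda>y. ff a (t + W y))" by (rule ff_intQ[OF a t])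
  have i2: "integrable Q (\<lambda>y. ff a (t + u + W y))" using ff_intQ[OF a, of "t+u"] t u by simp
  show ?thesis unfolding g1_def h_def using i1 i2 by (simp add: Q.prob_space algebra_simps)
qed

lemma g1_mono: assumes a: "a > 0" and t: "t \<ge> 0" and u: "u \<ge> 0"
  shows "g1 a t - g1 a (t + u) \<ge> 0"
proof -
  interpret Q: prob_space Q by (rule probQ)
  show ?thesis unfolding g1_diff[OF a t u]
  proof (intro integral_nonneg_AE AE_I2)
    fix y assume "y \<in> space Q"
    then show "0 \<le> ff a t - ff a (t + W y) - ff a (t + u) + ff a (t + u + W y)"
      using ff_cvx[OF a t, of "W y" u] W_nn[of y] u by (simp add: algebra_simps)
  qed
qed

lemma g1_smono: assumes a: "a > 0" and t: "t \<ge> 0" and u: "u > 0"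
  shows "g1 a t - g1 a (t + u) > 0"
proof -
  interpret Q: prob_space Q by (rule probQ)
  have i1: "integrable Q (\<lambda>y. ff a (t + W y))" by (rule ff_intQ[OF a t])
  have i2: "integrable Q (\<lambda>y. ff a (t + u + W y))" using ff_intQ[OF a, of "t+u"] t u by simp
  show ?thesis unfolding g1_diff[OF a t less_imp_le[OF u]]
  proof (rule pos_integral'[OF probQ _ _ Wset Q_pos])
    show "integrable Q (\<lambda>y. ff a t - ff a (t + W y) - ff a (t + u) + ff a (t + u + W y))"
      using i1 i2 by auto
  next
    fix y assume "y \<in> space Q"
    then show "0 \<le> ff a t - ff a (t + W y) - ff a (t + u) + ff a (t + u + W y)"
      using ff_cvx[OF a t, of "W y" u] W_nn[of y] u by (simp add: algebra_simps)
  next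
    fix y assume "y \<in> {y\<in>space Q. W y > 0}"
    then show "0 < ff a t - ff a (t + W y) - ff a (t + u) + ff a (t + u + W y)"
      using ff_scvx[OF a t, of "W y" u] u by (simp add: algebra_simps)
  qed
qed

lemma D_pos: assumes a: "a > 0" and t: "t \<ge> 0"
  shows "ff a t - 2 * h a t + kk a t > 0"
proof -
  interpret Q: prob_space Q by (rule probQ)
  have "(\<integral>y. g1 a t - g1 a (t + W y) \<partial>Q) = g1 a t - (\<integral>y. g1 a (t + W y) \<partial>Q)"
    using g1_intQ[OF a t] by (simp add: Q.prob_space)
  also have "(\<integral>y. g1 a (t + W y) \<partial>Q) = h a t - kk a t"
    unfolding g1_def using ff_intQ[OF a t] h_intQ[OF a t]
    by (simp add: h_def[of a t] kk_def)
  finally have e: "(\<integral>y. g1 a t - g1 a (t + W y) \<partial>Q) = ff a t - 2 * h a t + kk a t"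
    by (simp add: g1_def)
  have "(\<integral>y. g1 a t - g1 a (t + W y) \<partial>Q) > 0"
  proof (rule pos_integral'[OF probQ _ _ Wset Q_pos])
    show "integrable Q (\<lambda>y. g1 a t - g1 a (t + W y))" using g1_intQ[OF a t] by auto
  qed (use g1_mono[OF a t W_nn] g1_smono[OF a t] in auto)
  then show ?thesis using e by simp
qed

lemma F_int: assumes "a > 0" and [measurable]: "\<phi> \<in> borel_measurable borel"
  and "\<And>t. t \<ge> 0 \<Longrightarrow> \<bar>\<phi> t\<bar> \<le> B"
  shows "integrable (P k) (\<lambda>zs. (\<phi> :: real \<Rightarrow> real) (S k zs))"
  by (rule integrable_bnd[OF probP]) (auto intro: assms(3) S_nn)

lemma F_Suc: assumes a: "a > 0" and k: "k \<ge> 1"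
  shows "F (k+1) a = (\<integral>zs. h a (S k zs) \<partial>P k)"
  unfolding F_def h_def using lemA[OF k, of "ff a" 1] a by (auto intro: ff_bound)

lemma F_Suc2: assumes a: "a > 0" and k: "k \<ge> 1"
  shows "F (k+2) a = (\<integral>zs. kk a (S k zs) \<partial>P k)"
proof -
  have "F (k+2) a = F ((k+1)+1) a" by (simp add: numeral_2_eq_2)
  also have "\<dots> = (\<integral>zs. h a (S (k+1) zs) \<partial>P (k+1))" using F_Suc[OF a] k by simp
  also have "\<dots> = (\<integral>zs. kk a (S k zs) \<partial>P k)"
    unfolding kk_def using lemA[OF k, of "h a" 1] a by (auto intro: h_bnd)
  finally show ?thesis .
qed

lemma main_pt: assumes a: "a > 0" and k: "k \<ge> 1"
  shows "F k a - F (k+1) a > 0" "F k a - 2 * F (k+1) a + F (k+2) a > 0"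
proof -
  interpret Pk: prob_space "P k" by (rule probP)
  have i1: "integrable (P k) (\<lambda>zs. ff a (S k zs))" by (rule F_int[OF a ff_meas]) (rule ff_bound[OF a])
  have i2: "integrable (P k) (\<lambda>zs. h a (S k zs))" by (rule F_int[OF a h_meas]) (rule h_bnd[OF a])
  have i3: "integrable (P k) (\<lambda>zs. kk a (S k zs))" by (rule F_int[OF a kk_meas]) (rule kk_bnd[OF a])
  have "F k a - F (k+1) a = (\<integral>zs. g1 a (S k zs) \<partial>P k)"
    unfolding F_Suc[OF a k] unfolding F_def g1_def using i1 i2 by simp
  also have "\<dots> > 0"
    by (rule pos_integral'[OF probP _ _ sets.top]) (use g1_pos[OF a S_nn, unfolded g1_def] i1 i2 Pk.emeasure_space_1 in \<open>auto simp: g1_def intro: less_imp_le\<close>)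
  finally show "F k a - F (k+1) a > 0" .
  have "F k a - 2 * F (k+1) a + F (k+2) a = (\<integral>zs. ff a (S k zs) - 2 * h a (S k zs) + kk a (S k zs) \<partial>P k)"
    unfolding F_Suc[OF a k] F_Suc2[OF a k] unfolding F_def using i1 i2 i3 by simp
  also have "\<dots> > 0"
    by (rule pos_integral'[OF probP _ _ sets.top]) (use D_pos[OF a S_nn] i1 i2 i3 Pk.emeasure_space_1 in \<open>auto intro: less_imp_le\<close>)
  finally show "F k a - 2 * F (k+1) a + F (k+2) a > 0" .
qed

end


context setting begin

lemma eps_pt_F: "eps_pt M p q k x = F k (W x)"
  unfolding eps_pt_def F_def ff_def S_def ..

lemma F_meas[measurable]: "F k \<in> borel_measurable borel"
proof -
  interpret Pk: prob_space "P k" by (rule probP)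
  show ?thesis unfolding F_def[abs_def]
    by (rule Pk.borel_measurable_lebesgue_integral[where f="\<lambda>a zs. ff a (S k zs)"]) (simp add: ff_def)
qed

lemma F_bnd: assumes "a \<ge> 0" shows "\<bar>F k a\<bar> \<le> 1"
proof (cases "a = 0")
  case True then show ?thesis by (simp add: F_def ff_def)
next
  case False
  then have a: "a > 0" using assms by simp
  show ?thesis unfolding F_def
    by (rule integral_bnd[OF probP]) (auto intro: ff_bound[OF a] S_nn)
qed

abbreviation "PP \<equiv> density M (\<lambda>x. ennreal (p x))"

lemma probPi: "prob_space PP"
proof
  have "emeasure PP (space M) = (\<integral>\<^sup>+ y. ennreal (p y) * indicator (space M) y \<partial>M)"
    by (subst emeasure_density) auto
  also have "\<dots> = (\<integral>\<^sup>+ y. ennreal (p y) \<partial>M)"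
    by (intro nn_integral_cong) auto
  finally show "emeasure PP (space PP) = 1" using p1 by simp
qed

lemma eps_eq: "eps M p q k = (\<integral>x. indicator (supp_set M p) x * F k (W x) \<partial>PP)"
  unfolding eps_def set_lebesgue_integral_def eps_pt_F by simp

lemma supp_meas[measurable]: "supp_set M p \<in> sets M"
  unfolding supp_set_def by measurable

lemma int_eps: "integrable PP (\<lambda>x. indicator (supp_set M p) x * F k (W x))"
  by (rule integrable_bnd[OF probPi, where B=1])
     (auto simp: indicator_def intro!: F_bnd W_nn)

lemma supp_pos: "emeasure PP (supp_set M p) \<noteq> 0"
  unfolding supp_set_def by (rule dens_pos[OF pm pm p_nn p_nn p1]) auto

lemma main_eps: assumes k: "k \<ge> 1"
  shows "eps M p q k - eps M p q (k+1) > 0" "eps M p q k - 2 * eps M p q (k+1) + eps M p q (k+2) > 0"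
proof -
  have Wpos: "x \<in> supp_set M p \<Longrightarrow> W x > 0" for x
    using W_pos_iff unfolding supp_set_def by auto
  have "eps M p q k - eps M p q (k+1) =
     (\<integral>x. indicator (supp_set M p) x * (F k (W x) - F (k+1) (W x)) \<partial>PP)"
    unfolding eps_eq using int_eps[of k] int_eps[of "k+1"] by (simp add: algebra_simps)
  also have "\<dots> > 0"
  proof (rule pos_integral'[OF probPi _ _ _ supp_pos])
    show "integrable PP (\<lambda>x. indicator (supp_set M p) x * (F k (W x) - F (k+1) (W x)))"
      using int_eps[of k] int_eps[of "k+1"] by (simp add: algebra_simps)
  qed (use main_pt(1)[OF Wpos k] in \<open>auto simp: indicator_def intro: less_imp_le\<close>)
  finally show "eps M p q k - eps M p q (k+1) > 0" .
  have "eps M p q k - 2 * eps M p q (k+1) + eps M p q (k+2) =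
     (\<integral>x. indicator (supp_set M p) x * (F k (W x) - 2 * F (k+1) (W x) + F (k+2) (W x)) \<partial>PP)"
    unfolding eps_eq using int_eps[of k] int_eps[of "k+1"] int_eps[of "k+2"] by (simp add: algebra_simps)
  also have "\<dots> > 0"
  proof (rule pos_integral'[OF probPi _ _ _ supp_pos])
    show "integrable PP (\<lambda>x. indicator (supp_set M p) x * (F k (W x) - 2 * F (k+1) (W x) + F (k+2) (W x)))"
      using int_eps[of k] int_eps[of "k+1"] int_eps[of "k+2"] by (simp add: algebra_simps)
  qed (use main_pt(2)[OF Wpos k] in \<open>auto simp: indicator_def intro: less_imp_le\<close>)
  finally show "eps M p q k - 2 * eps M p q (k+1) + eps M p q (k+2) > 0" .
qed

end

theorem lemma6p9:
  fixes M :: "'a measure" and p q :: "'a \<Rightarrow> real" and N :: nat and x :: 'a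
  assumes "sigma_finite_measure M"
    and "p \<in> borel_measurable M" and "q \<in> borel_measurable M"
    and "\<And>y. y \<in> space M \<Longrightarrow> p y \<ge> 0"
    and "\<And>y. y \<in> space M \<Longrightarrow> q y \<ge> 0"
    and "(\<integral>\<^sup>+ y. ennreal (p y) \<partial>M) = 1"
    and "(\<integral>\<^sup>+ y. ennreal (q y) \<partial>M) = 1"
    and "\<And>y. y \<in> space M \<Longrightarrow> p y > 0 \<Longrightarrow> q y > 0"
    and "N \<ge> 1"
    and "x \<in> supp_set M p"
  shows "eps M p q N - eps M p q (N + 1) > 0 \<and>
     eps M p q N - 2 * eps M p q (N + 1) + eps M p q (N + 2) > 0 \<and>
     eps_pt M p q N x - eps_pt M p q (N + 1) x > 0 \<and>
     eps_pt M p q N x - 2 * eps_pt M p q (N + 1) x + eps_pt M p q (N + 2) x > 0"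
proof -
  interpret setting M p q using assms(2-8) by unfold_locales auto
  have a: "wgt p q x > 0" using W_pos_iff assms(10) unfolding supp_set_def by auto
  show ?thesis using main_eps[OF assms(9)] main_pt[OF a assms(9)] by (simp add: eps_pt_F)
qed

end
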